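(* Let $r \in \mathbb{N}$. Then $\mathsf{D}_2(C_2^r) < (3r + 6)/2$.
   Context: $C_2^r$ is the elementary abelian $2$-group of rank $r$. A sequence over a finite abelian group $G$ is a finite unordered list of elements of $G$ with repetitions allowed; it is zero-sum if its terms sum to $0$. $\mathsf{D}_k(G)$ is the smallest integer $\ell$ such that every sequence over $G$ of length at least $\ell$ has $k$ disjoint non-empty zero-sum subsequences. *)

theory Defs
  imports Complex_Main "HOL-Library.Multiset" "HOL-Library.Z2" "HOL-Library.Function_Algebras"
begin

text \<open>The elementary abelian 2-group C_2^r, realised as the subgroup of
  the pointwise group (nat => bit) consisting of vectors supported on {0..<r}.\<close>
definition C2r :: "nat \<Rightarrow> (nat \<Rightarrow> bit) set" where
  "C2r r = {v. \<forall>i\<ge>r. v i = 0}"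

definition has_k_disjoint_zs :: "nat \<Rightarrow> ('a::comm_monoid_add) multiset \<Rightarrow> bool" where
  "has_k_disjoint_zs k S \<longleftrightarrow>
     (\<exists>Ts :: 'a multiset list. length Ts = k \<and> sum_list Ts \<subseteq># S \<and>
        (\<forall>T\<in>set Ts. T \<noteq> {#} \<and> sum_mset T = 0))"

definition Dk :: "nat \<Rightarrow> ('a::comm_monoid_add) set \<Rightarrow> nat" where
  "Dk k G = (LEAST l. \<forall>S. set_mset S \<subseteq> G \<longrightarrow> size S \<ge> l \<longrightarrow> has_k_disjoint_zs k S)"

end

theory Submission imports Defs begin

lemma badD: "\<not>(\<exists>A B. P A B) \<Longrightarrow> P A B \<Longrightarrow> False" by blast

lemma bit_self: "(x::bit) + x = 0"
  by (cases "x = 0") auto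

lemma vec_self: "(v::nat\<Rightarrow>bit) + v = 0"
  by (rule ext) (simp add: bit_self)

lemma vec_eq_iff_add: "((v::nat\<Rightarrow>bit) = w) \<longleftrightarrow> v + w = 0"
proof
  assume "v + w = 0"
  then have "v + w + w = w" by simp
  then show "v = w" by (simp add: add.assoc vec_self)
qed (simp add: vec_self)

lemma card_supp:
  assumes "finite I"
  shows "finite {v::nat\<Rightarrow>bit. \<forall>j. j\<notin>I \<longrightarrow> v j = 0} \<and> card {v::nat\<Rightarrow>bit. \<forall>j. j\<notin>I \<longrightarrow> v j = 0} \<le> 2 ^ card I"
proof -
  let ?V = "{v::nat\<Rightarrow>bit. \<forall>j. j\<notin>I \<longrightarrow> v j = 0}"
  have inj: "inj_on (\<lambda>v. {j. v j = 1}) ?V"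
  proof (rule inj_onI)
    fix v w assume "v \<in> ?V" "w \<in> ?V" "{j. v j = 1} = {j. w j = 1}"
    then have eq: "\<And>j. (v j = 1) = (w j = 1)" by (simp add: set_eq_iff)
    show "v = w"
    proof (rule ext)
      fix j show "v j = w j"
        using eq[of j] by (cases "v j = 1"; cases "w j = 1") auto
    qed
  qed
  have sub: "(\<lambda>v. {j. v j = 1}) ` ?V \<subseteq> Pow I"
    by auto
  have fin: "finite ?V"
    using finite_imageD[OF finite_subset[OF sub] inj] assms by auto
  have "card ?V \<le> card (Pow I)"
    using card_inj_on_le[OF inj sub] assms by auto
  then show ?thesis using fin assms by (simp add: card_Pow)
qed


lemma sum_app: "(sum f A) (j::nat) = (\<Sum>x\<in>A. (f x j :: bit))"
  by (induction A rule: infinite_finite_induct) auto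

lemma davenport:
  fixes f :: "'a \<Rightarrow> nat \<Rightarrow> bit"
  assumes "finite I" "finite U" "\<forall>x\<in>U. \<forall>j. j\<notin>I \<longrightarrow> f x j = 0" "card U \<ge> card I + 1"
  shows "\<exists>W\<subseteq>U. W \<noteq> {} \<and> sum f W = 0"
proof -
  let ?V = "{v::nat\<Rightarrow>bit. \<forall>j. j\<notin>I \<longrightarrow> v j = 0}"
  have im: "(\<lambda>A. sum f A) ` Pow U \<subseteq> ?V"
    using assms(3) by (auto simp: sum_app intro!: sum.neutral) blast
  have cV: "finite ?V" "card ?V \<le> 2 ^ card I" using card_supp[OF assms(1)] by auto
  have "\<not> inj_on (\<lambda>A. sum f A) (Pow U)"
  proof
    assume "inj_on (\<lambda>A. sum f A) (Pow U)"
    then have "card (Pow U) \<le> card ?V" using card_inj_on_le[OF _ im cV(1)] by blast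
    moreover have "card (Pow U) = 2 ^ card U" using assms(2) by (simp add: card_Pow)
    moreover have "(2::nat) ^ card I < 2 ^ card U" using assms(4) by simp
    ultimately show False using cV(2) by linarith
  qed
  then obtain A B where AB: "A \<subseteq> U" "B \<subseteq> U" "A \<noteq> B" "sum f A = sum f B"
    unfolding inj_on_def by auto
  have fA: "finite A" "finite B" using AB assms(2) finite_subset by auto
  have e1: "sum f A = sum f (A \<inter> B) + sum f (A - B)" using fA by (simp add: sum.Int_Diff)
  have e2: "sum f B = sum f (A \<inter> B) + sum f (B - A)" using fA
    by (metis Int_commute sum.Int_Diff)
  have "sum f (A - B) = sum f (B - A)" using e1 e2 AB(4) by simp
  then have "sum f ((A - B) \<union> (B - A)) = 0"
    using fA by (subst sum.union_disjoint) (auto simp: vec_self)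
  moreover have "(A - B) \<union> (B - A) \<noteq> {}" using AB(3) by auto
  moreover have "(A - B) \<union> (B - A) \<subseteq> U" using AB by auto
  ultimately show ?thesis by blast
qed

lemma zs_small:
  fixes f :: "'a \<Rightarrow> nat \<Rightarrow> bit"
  assumes "finite I" "finite U" "\<forall>x\<in>U. \<forall>j. j\<notin>I \<longrightarrow> f x j = 0" "sum f U = 0"
    and bad: "\<not>(\<exists>A B. A \<subseteq> U \<and> B \<subseteq> U \<and> A\<inter>B={} \<and> A\<noteq>{} \<and> B\<noteq>{} \<and> sum f A = 0 \<and> sum f B = 0)"
  shows "card U \<le> card I + 1"
proof (rule ccontr)
  assume nt: "\<not> card U \<le> card I + 1"
  then obtain x where x: "x \<in> U" by fastforce
  have "card (U - {x}) \<ge> card I + 1" using nt x assms(2) by simp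
  then obtain W where W: "W \<subseteq> U - {x}" "W \<noteq> {}" "sum f W = 0"
    using davenport[OF assms(1) _ _, of "U - {x}" f] assms(2,3) by auto
  have "sum f (U - W) = 0"
  proof -
    have "sum f (U - W) = sum f U - sum f W"
      by (rule sum_diff) (use W assms(2) in auto)
    then show ?thesis using W(3) assms(4) by simp
  qed
  moreover have "U - W \<noteq> {}" using W x by auto
  ultimately show False using W by - (rule badD[OF bad, of W "U - W"], auto)
qed


lemma main:
  fixes f :: "'a \<Rightarrow> nat \<Rightarrow> bit"
  assumes "finite I" "finite N" "\<forall>x\<in>N. \<forall>j. j\<notin>I \<longrightarrow> f x j = 0"
    and "\<not>(\<exists>A B. A \<subseteq> N \<and> B \<subseteq> N \<and> A\<inter>B={} \<and> A\<noteq>{} \<and> B\<noteq>{} \<and> sum f A = 0 \<and> sum f B = 0)"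
  shows "2 * card N \<le> 3 * card I + 3"
  using assms
proof (induction "card N" arbitrary: N f I rule: less_induct)
  case less
  note bad = less.prems(4)
  show ?case
  proof (cases "N = {}")
    case True then show ?thesis by simp
  next
    case False
    then obtain e where e: "e \<in> N" by blast
    have cN: "card N = card (N - {e}) + 1" using e less.prems(2)
      by (metis card_Suc_Diff1 Suc_eq_plus1)
    show ?thesis
    proof (cases "f e = 0")
      case True
      have "card (N - {e}) \<le> card I"
      proof (rule ccontr)
        assume "\<not> card (N - {e}) \<le> card I"
        then obtain W where W: "W \<subseteq> N - {e}" "W \<noteq> {}" "sum f W = 0"
          using davenport[of I "N - {e}" f] less.prems(1,2,3) by auto
        have "{e} \<subseteq> N" "W \<subseteq> N" "W \<inter> {e} = {}" "sum f {e} = 0" using W e True by auto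
        then show False using W e True by - (rule badD[OF bad, of W "{e}"], auto)
      qed
      then show ?thesis using cN by simp
    next
      case False
      then obtain i where fi: "f e i \<noteq> 0" by (auto simp: fun_eq_iff)
      then have fi1: "f e i = 1" by simp
      have iI: "i \<in> I" using fi e less.prems(3) by blast
      define g where "g x = f x + (\<lambda>j. f x i * f e j)" for x
      have gsum: "sum g A = sum f A + (\<lambda>j. (\<Sum>x\<in>A. f x i) * f e j)" for A
      proof (rule ext)
        fix j
        have "(sum g A) j = (\<Sum>x\<in>A. f x j + f x i * f e j)"
          by (simp only: sum_app g_def plus_fun_apply)
        also have "\<dots> = (\<Sum>x\<in>A. f x j) + (\<Sum>x\<in>A. f x i) * f e j"
          by (simp only: sum.distrib sum_distrib_right)
        finally show "(sum g A) j = (sum f A + (\<lambda>j. (\<Sum>x\<in>A. f x i) * f e j)) j"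
          by (simp only: sum_app plus_fun_apply)
      qed
      have gsupp: "\<forall>x\<in>N - {e}. \<forall>j. j\<notin>I - {i} \<longrightarrow> g x j = 0"
      proof (intro ballI allI impI)
        fix x j assume x: "x \<in> N - {e}" and j: "j \<notin> I - {i}"
        show "g x j = 0"
        proof (cases "j = i")
          case True then show ?thesis by (simp add: g_def fi1 bit_self)
        next
          case False then show ?thesis using j x e less.prems(3) by (simp add: g_def)
        qed
      qed
      have gz: "sum f A = 0 \<or> sum f A = f e" if "sum g A = 0" for A
      proof (cases "(\<Sum>x\<in>A. f x i) = 0")
        case True
        then have "(\<lambda>j. (\<Sum>x\<in>A. f x i) * f e j) = 0" by (simp only: mult_zero_left zero_fun_def)
        then show ?thesis using that gsum[of A] by simp
      next
        case False
        then have "(\<Sum>x\<in>A. f x i) = 1" by simp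
        then have "(\<lambda>j. (\<Sum>x\<in>A. f x i) * f e j) = f e" by (simp only: mult_1_left)
        then have "sum f A + f e = 0" using that gsum[of A] by simp
        then have "sum f A = f e" by (rule vec_eq_iff_add[THEN iffD2])
        then show ?thesis by (rule disjI2)
      qed
      show ?thesis
      proof (cases "\<exists>A B. A \<subseteq> N - {e} \<and> B \<subseteq> N - {e} \<and> A\<inter>B={} \<and> A\<noteq>{} \<and> B\<noteq>{} \<and> sum g A = 0 \<and> sum g B = 0")
        case False
        have "2 * card (N - {e}) \<le> 3 * card (I - {i}) + 3"
        proof (rule less.hyps[where N="N - {e}" and I="I - {i}" and f=g])
          show "card (N - {e}) < card N" using cN by simp
          show "finite (I - {i})" "finite (N - {e})" using less.prems(1,2) by auto
          show "\<forall>x\<in>N - {e}. \<forall>j. j \<notin> I - {i} \<longrightarrow> g x j = 0" by (rule gsupp)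
          show "\<not> (\<exists>A B. A \<subseteq> N - {e} \<and> B \<subseteq> N - {e} \<and> A \<inter> B = {} \<and> A \<noteq> {} \<and> B \<noteq> {} \<and> sum g A = 0 \<and> sum g B = 0)"
            by (rule False)
        qed
        moreover have "card (I - {i}) + 1 = card I" using iI less.prems(1)
          by (metis card_Suc_Diff1 Suc_eq_plus1)
        ultimately show ?thesis using cN by linarith
      next
        case True
        then obtain A B where AB: "A \<subseteq> N - {e}" "B \<subseteq> N - {e}" "A\<inter>B={}" "A\<noteq>{}" "B\<noteq>{}"
          "sum g A = 0" "sum g B = 0" by blast
        have fin: "finite A" "finite B" using finite_subset[OF AB(1)] finite_subset[OF AB(2)] less.prems(2) by auto
        have ins: "sum f (insert e X) = sum f X + f e" if "X \<subseteq> N - {e}" for X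
          using that less.prems(2) finite_subset[of X N]
          by (subst sum.insert) (auto simp: add.commute)
        have fA: "sum f A = f e"
        proof (rule ccontr)
          assume "sum f A \<noteq> f e"
          then have A0: "sum f A = 0" using gz AB(6) by blast
          show False
          proof (cases "sum f B = 0")
            case True then show False using AB A0 True by - (rule badD[OF bad, of A B], auto)
          next
            case False
            then have "sum f B = f e" using gz AB(7) by blast
            then have "sum f (insert e B) = 0" using ins[OF AB(2)] by (simp add: vec_self)
            moreover have "insert e B \<subseteq> N" "A \<inter> insert e B = {}" using AB e by auto
            ultimately show False using AB A0 by - (rule badD[OF bad, of A "insert e B"], auto)
          qed
        qed
        have fB: "sum f B = f e"
        proof (rule ccontr)
          assume "sum f B \<noteq> f e"
          then have B0: "sum f B = 0" using gz AB(7) by blast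
          have "sum f (insert e A) = 0" using fA ins[OF AB(1)] by (simp add: vec_self)
          moreover have "insert e A \<subseteq> N" "insert e A \<inter> B = {}" using AB e by auto
          ultimately show False using AB B0 by - (rule badD[OF bad, of "insert e A" B], auto)
        qed
        define Z where "Z = N - A - B - {e}"
        have finZ: "finite Z" using Z_def less.prems(2) by auto
        have indep: "card (Z \<union> X) \<le> card I" if X: "X \<subseteq> N - {e}" "Y \<subseteq> N - {e}" "X \<inter> Y = {}"
          "sum f Y = f e" "(X = A \<and> Y = B) \<or> (X = B \<and> Y = A)" for X Y
        proof (rule ccontr)
          assume "\<not> card (Z \<union> X) \<le> card I"
          moreover have "Z \<union> X \<subseteq> N" using X Z_def by auto
          ultimately obtain W where W: "W \<subseteq> Z \<union> X" "W \<noteq> {}" "sum f W = 0"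
            using davenport[of I "Z \<union> X" f] less.prems(1,2,3) finite_subset by (metis not_less_eq_eq Suc_eq_plus1 subset_iff)
          have "sum f (insert e Y) = 0" using ins[OF X(2)] X(4) by (simp add: vec_self)
          moreover have "insert e Y \<subseteq> N" "W \<subseteq> N" "W \<inter> insert e Y = {}"
            using X W Z_def e by auto
          ultimately show False using W by - (rule badD[OF bad, of W "insert e Y"], auto)
        qed
        have i1: "card (Z \<union> A) \<le> card I" using indep[of A B] AB fB by auto
        have i2: "card (Z \<union> B) \<le> card I" using indep[of B A] AB fA by auto
        have sAB: "sum f (A \<union> B) = 0" using fA fB fin AB(3)
          by (simp add: sum.union_disjoint vec_self)
        have cAB: "card (A \<union> B) \<le> card I + 1"
        proof (rule zs_small[OF less.prems(1)])
          show "finite (A \<union> B)" using fin by auto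
          show "\<forall>x\<in>A \<union> B. \<forall>j. j \<notin> I \<longrightarrow> f x j = 0" using AB less.prems(3) by auto
          show "sum f (A \<union> B) = 0" by (rule sAB)
          show "\<not>(\<exists>A' B'. A' \<subseteq> A \<union> B \<and> B' \<subseteq> A \<union> B \<and> A'\<inter>B'={} \<and> A'\<noteq>{} \<and> B'\<noteq>{} \<and> sum f A' = 0 \<and> sum f B' = 0)"
            proof (intro notI, elim exE conjE)
              fix A' B' assume H: "A' \<subseteq> A \<union> B" "B' \<subseteq> A \<union> B" "A'\<inter>B'={}" "A'\<noteq>{}" "B'\<noteq>{}" "sum f A' = 0" "sum f B' = 0"
              show False using H AB by - (rule badD[OF bad, of A' B'], auto)
            qed
        qed
        have dZA: "Z \<inter> A = {}" "Z \<inter> B = {}" using Z_def by auto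
        have c1: "card (Z \<union> A) = card Z + card A" using dZA finZ fin by (simp add: card_Un_disjoint)
        have c2: "card (Z \<union> B) = card Z + card B" using dZA finZ fin by (simp add: card_Un_disjoint)
        have c3: "card (A \<union> B) = card A + card B" using AB(3) fin by (simp add: card_Un_disjoint)
        have "N - {e} = Z \<union> (A \<union> B)" using Z_def AB by auto
        then have "card (N - {e}) = card Z + card (A \<union> B)"
          using dZA finZ fin by (simp add: card_Un_disjoint Int_Un_distrib)
        then show ?thesis using cN c1 c2 c3 i1 i2 cAB by linarith
      qed
    qed
  qed
qed


lemma good_seq:
  fixes S :: "(nat \<Rightarrow> bit) multiset"
  assumes "set_mset S \<subseteq> C2r r" "2 * size S \<ge> 3 * r + 4"
  shows "has_k_disjoint_zs 2 S"
proof -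
  obtain xs where xs: "mset xs = S" using ex_mset by blast
  let ?N = "{0..<length xs}" and ?f = "\<lambda>k. xs ! k"
  have supp: "\<forall>x\<in>?N. \<forall>j. j \<notin> {0..<r} \<longrightarrow> ?f x j = 0"
  proof (intro ballI allI impI)
    fix x j assume "x \<in> ?N" "j \<notin> {0..<r}"
    then have "xs ! x \<in> C2r r" using assms(1) xs by (metis atLeastLessThan_iff nth_mem set_mset_mset subsetD)
    then show "?f x j = 0" using \<open>j \<notin> {0..<r}\<close> unfolding C2r_def by auto
  qed
  have "\<exists>A B. A \<subseteq> ?N \<and> B \<subseteq> ?N \<and> A\<inter>B={} \<and> A\<noteq>{} \<and> B\<noteq>{} \<and> sum ?f A = 0 \<and> sum ?f B = 0"
  proof (rule ccontr)
    assume "\<not> ?thesis"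
    from main[OF _ _ supp this] have "2 * card ?N \<le> 3 * card {0..<r} + 3" by simp
    moreover have "card ?N = size S" using xs by auto
    ultimately show False using assms(2) by simp
  qed
  then obtain A B where AB: "A \<subseteq> ?N" "B \<subseteq> ?N" "A\<inter>B={}" "A\<noteq>{}" "B\<noteq>{}" "sum ?f A = 0" "sum ?f B = 0"
    by blast
  have fin: "finite A" "finite B" using finite_subset[OF AB(1)] finite_subset[OF AB(2)] by auto
  let ?Ts = "[image_mset ?f (mset_set A), image_mset ?f (mset_set B)]"
  have "sum_list ?Ts = image_mset ?f (mset_set (A \<union> B))"
    using fin AB(3) by (simp add: mset_set_Union)
  also have "\<dots> \<subseteq># image_mset ?f (mset_set ?N)"
    using AB by (intro image_mset_subseteq_mono) (rule subset_imp_msubset_mset_set, auto)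
  also have "image_mset ?f (mset_set ?N) = S"
    by (metis xs map_nth mset_map mset_upt)
  finally have sub: "sum_list ?Ts \<subseteq># S" .
  have ne: "mset_set A \<noteq> {#}" "mset_set B \<noteq> {#}" using fin AB(4,5) by (simp_all add: mset_set_empty_iff)
  have "\<forall>T\<in>set ?Ts. T \<noteq> {#} \<and> sum_mset T = 0"
    using AB(6,7) ne by (simp add: sum_unfold_sum_mset[symmetric])
  then show ?thesis unfolding has_k_disjoint_zs_def using sub
    by (intro exI[of _ ?Ts]) simp
qed

theorem theorem7p8:
  fixes r :: nat
  shows "real (Dk 2 (C2r r)) < (3 * real r + 6) / 2"
proof -
  let ?l = "(3 * r + 5) div 2"
  have "\<forall>S. set_mset S \<subseteq> C2r r \<longrightarrow> size S \<ge> ?l \<longrightarrow> has_k_disjoint_zs 2 S"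
  proof (intro allI impI)
    fix S :: "(nat \<Rightarrow> bit) multiset"
    assume "set_mset S \<subseteq> C2r r" "size S \<ge> ?l"
    moreover from this(2) have "2 * size S \<ge> 3 * r + 4" by linarith
    ultimately show "has_k_disjoint_zs 2 S" using good_seq by blast
  qed
  then have "Dk 2 (C2r r) \<le> ?l" unfolding Dk_def by (rule Least_le)
  then have "2 * Dk 2 (C2r r) \<le> 3 * r + 5" by linarith
  then have "2 * real (Dk 2 (C2r r)) \<le> 3 * real r + 5" by linarith
  then show ?thesis by (simp add: field_simps)
qed

end
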